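(* Let $(\eta_k)_{k\in\mathbb{N}}$ be independent identically distributed random variables with values in $\mathbb{N}$, $P(\eta_k=m)=p_m$ ($p_m\ge0$, $\sum_{m=1}^\infty p_m=1$), and let $$\eta=\sum_{k=1}^\infty\frac{(-1)^{k-1}}{\eta_1(\eta_1+\eta_2)\cdots(\eta_1+\eta_2+\dots+\eta_k)}.$$ Then: (1) if $p_i=1$ for some $i\in\mathbb{N}$, the distribution of $\eta$ is degenerate (concentrated at one point); (2) in all other cases the distribution of $\eta$ is purely singularly continuous (i.e. it has no atoms and is singular with respect to Lebesgue measure). *)

theory Defs
  imports "HOL-Probability.Probability"
begin

text \<open>The random series: with 0-based indexing, X 0 = eta_1, X 1 = eta_2, ...
  eta = sum_{k>=0} (-1)^k / prod_{j=0..k} (X 0 + ... + X j).\<close>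
definition eta_series :: "(nat \<Rightarrow> 'a \<Rightarrow> nat) \<Rightarrow> 'a \<Rightarrow> real" where
  "eta_series X \<omega> =
     (\<Sum>k. (-1) ^ k / (\<Prod>j\<le>k. real (\<Sum>i\<le>j. X i \<omega>)))"

end

theory Submission
  imports Defs
begin

definition T :: "nat \<Rightarrow> (nat \<Rightarrow> nat) \<Rightarrow> real" where
  "T u x = (\<Sum>k. (-1) ^ k / (\<Prod>j\<le>k. real (u + (\<Sum>i\<le>j. x i))))"

definition pa :: "nat \<Rightarrow> (nat \<Rightarrow> nat) \<Rightarrow> nat \<Rightarrow> real" where
  "pa u x k = 1 / (\<Prod>j\<le>k. real (u + (\<Sum>i\<le>j. x i)))"

lemma sum_ge: assumes "\<And>i. x i \<ge> 1" shows "(\<Sum>i\<le>j. x i) \<ge> Suc j"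
proof -
  have "(\<Sum>i\<le>j. (1::nat)) \<le> (\<Sum>i\<le>j. x i)" by (rule sum_mono) (use assms in auto)
  then show ?thesis by simp
qed

lemma prod_ge: assumes "\<And>i. x i \<ge> 1"
  shows "(\<Prod>j\<le>k. real (u + (\<Sum>i\<le>j. x i))) \<ge> real (Suc k)"
proof (induction k)
  case 0 then show ?case using assms[of 0] by simp
next
  case (Suc k)
  have f0: "Suc (Suc k) \<le> u + (\<Sum>i\<le>Suc k. x i)" using sum_ge[of x, OF assms, of "Suc k"] by simp
  have f: "real (u + (\<Sum>i\<le>Suc k. x i)) \<ge> real (Suc (Suc k))" using of_nat_le_iff[THEN iffD2, OF f0] by blast
  have "(\<Prod>j\<le>Suc k. real (u + (\<Sum>i\<le>j. x i))) = (\<Prod>j\<le>k. real (u + (\<Sum>i\<le>j. x i))) * real (u + (\<Sum>i\<le>Suc k. x i))"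
    by simp
  also have "\<dots> \<ge> real (Suc k) * real (Suc (Suc k))"
    using Suc f by (intro mult_mono) auto
  finally show ?case
    by (smt (verit) of_nat_0_le_iff of_nat_Suc mult_le_cancel_right1 mult.commute)
qed

lemma pa_props: assumes "\<And>i. x i \<ge> 1"
  shows "pa u x \<longlonglongrightarrow> 0" "\<And>n. 0 \<le> pa u x n" "\<And>n. pa u x (Suc n) \<le> pa u x n"
proof -
  have pk: "(\<Prod>j\<le>k. real (u + (\<Sum>i\<le>j. x i))) \<ge> real (Suc k)" for k by (rule prod_ge[OF assms])
  have pos: "(\<Prod>j\<le>k. real (u + (\<Sum>i\<le>j. x i))) \<ge> 1" for k
    using pk[of k] by linarith
  show nn: "\<And>n. 0 \<le> pa u x n" unfolding pa_def using pos by (intro divide_nonneg_nonneg) (auto intro: order_trans[OF zero_le_one])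
  show "\<And>n. pa u x (Suc n) \<le> pa u x n"
  proof -
    fix n
    have f: "real (u + (\<Sum>i\<le>Suc n. x i)) \<ge> 1" using sum_ge[of x, OF assms, of "Suc n"] by linarith
    have "pa u x (Suc n) = pa u x n / real (u + (\<Sum>i\<le>Suc n. x i))" unfolding pa_def by simp
    also have "\<dots> \<le> pa u x n / 1" using f nn[of n] by (intro divide_left_mono) auto
    finally show "pa u x (Suc n) \<le> pa u x n" by simp
  qed
  show "pa u x \<longlonglongrightarrow> 0"
  proof (rule real_tendsto_sandwich[of "\<lambda>_. 0" _ _ "\<lambda>n. 1 / real (Suc n)"])
    show "\<forall>\<^sub>F n in sequentially. 0 \<le> pa u x n" using nn by simp
    have "pa u x n \<le> 1 / real (Suc n)" for n
      unfolding pa_def using pk[of n] by (intro divide_left_mono) auto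
    then show "\<forall>\<^sub>F n in sequentially. pa u x n \<le> 1 / real (Suc n)" by simp
    show "(\<lambda>n. 1 / real (Suc n)) \<longlonglongrightarrow> 0" using LIMSEQ_inverse_real_of_nat by (simp add: inverse_eq_divide)
  qed simp
qed

lemma T_alt: "T u x = (\<Sum>k. (-1)^k * pa u x k)"
  unfolding T_def pa_def by simp

lemma T_summable: assumes "\<And>i. x i \<ge> 1"
  shows "summable (\<lambda>k. (-1)^k * pa u x k)"
  using summable_Leibniz'(1)[OF pa_props[OF assms]] .

lemma T_bounds: assumes "\<And>i. x i \<ge> 1"
  shows "1 / real (u + x 0 + 1) \<le> T u x" "T u x \<le> 1 / real (u + x 0)"
proof -
  note L = summable_Leibniz'[OF pa_props[OF assms, of u]]
  have "T u x \<le> (\<Sum>i<2*0+1. (-1)^i * pa u x i)" unfolding T_alt by (rule L(4))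
  then show "T u x \<le> 1 / real (u + x 0)" by (simp add: pa_def)
  have lo: "(\<Sum>i<2*1. (-1)^i * pa u x i) \<le> T u x" unfolding T_alt by (rule L(2))
  have s: "(\<Sum>i<2*1. (-1)^i * pa u x i) = pa u x 0 - pa u x 1" by (simp add: numeral_2_eq_2)
  have x1: "x 1 \<ge> 1" using assms by simp
  define a where "a = real (u + x 0)"
  have a1: "a \<ge> 1" using assms[of 0] by (simp add: a_def)
  have p0: "pa u x 0 = 1 / a" by (simp add: pa_def a_def)
  have p1: "pa u x 1 = 1 / (a * real (u + (x 0 + x 1)))" by (simp add: pa_def a_def)
  have b: "real (u + (x 0 + x 1)) \<ge> a + 1" using x1 by (simp add: a_def)
  have e: "real (u + x 0 + 1) = a + 1" by (simp add: a_def)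
  have "1 / real (u + x 0 + 1) = 1 / a - 1 / (a * (a + 1))" unfolding e
  proof -
    have "a + a*a \<noteq> 0" using a1 by (smt (verit) mult_nonneg_nonneg)
    then show "1 / (a + 1) = 1 / a - 1 / (a * (a + 1))" using a1 by (simp add: field_simps)
  qed
  also have "\<dots> \<le> 1 / a - 1 / (a * real (u + (x 0 + x 1)))"
    using a1 b by (intro diff_left_mono divide_left_mono mult_left_mono) auto
  finally show "1 / real (u + x 0 + 1) \<le> T u x" using lo s p0 p1 by simp
qed

lemma T_rec: assumes "\<And>i. x i \<ge> 1"
  shows "T u x = (1 - T (u + x 0) (\<lambda>i. x (Suc i))) / real (u + x 0)"
proof -
  let ?f = "\<lambda>k. (-1)^k * pa u x k"
  let ?g = "\<lambda>k. (-1)^k * pa (u + x 0) (\<lambda>i. x (Suc i)) k"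
  have sx: "\<And>i. x (Suc i) \<ge> 1" using assms by simp
  have eq: "?f (Suc k) = - ?g k / real (u + x 0)" for k
  proof -
    have "(\<Prod>j\<le>Suc k. real (u + (\<Sum>i\<le>j. x i))) = real (u + x 0) * (\<Prod>j\<le>k. real (u + (\<Sum>i\<le>Suc j. x i)))"
      by (subst prod.atMost_Suc_shift) simp
    also have "(\<Prod>j\<le>k. real (u + (\<Sum>i\<le>Suc j. x i))) = (\<Prod>j\<le>k. real (u + x 0 + (\<Sum>i\<le>j. x (Suc i))))"
        by (intro prod.cong refl, subst sum.atMost_Suc_shift) simp
    finally show ?thesis unfolding pa_def by simp
  qed
  have "T u x = ?f 0 + (\<Sum>k. ?f (Suc k))"
    unfolding T_alt using suminf_split_head[OF T_summable[OF assms, of u]] by simp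
  also have "(\<Sum>k. ?f (Suc k)) = (\<Sum>k. - ?g k / real (u + x 0))" by (simp only: eq)
  also have "\<dots> = - (\<Sum>k. ?g k) / real (u + x 0)"
    using suminf_divide[OF summable_minus[OF T_summable[OF sx, of "u + x 0"]]]
      suminf_minus[OF T_summable[OF sx, of "u + x 0"]]
    by simp
  finally show ?thesis unfolding T_alt[of "u + x 0"] by (simp add: pa_def diff_divide_distrib)
qed


lemma T_pos: assumes "\<And>i. x i \<ge> 1" shows "T u x > 0"
proof -
  have "1 / real (u + x 0 + 1) > 0" by simp
  then show ?thesis using T_bounds(1)[of x, OF assms, of u] by linarith
qed

lemma T_upper_strict: assumes "\<And>i. x i \<ge> 1" shows "T u x < 1 / real (u + x 0)"
proof -
  have sx: "\<And>i. x (Suc i) \<ge> 1" using assms by simp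
  define a where "a = real (u + x 0)"
  define r where "r = T (u + x 0) (\<lambda>i. x (Suc i))"
  have a: "a > 0" using assms[of 0] by (simp add: a_def)
  have r: "r > 0" unfolding r_def by (rule T_pos[OF sx])
  have e: "T u x = (1 - r) / a" unfolding r_def a_def by (rule T_rec[OF assms])
  have "(1 - r) / a < 1 / a" using a r by (intro divide_strict_right_mono) auto
  then show ?thesis using e by (simp add: a_def)
qed

lemma T_lower_strict: assumes "\<And>i. x i \<ge> 1" shows "1 / real (u + x 0 + 1) < T u x"
proof -
  have sx: "\<And>i. x (Suc i) \<ge> 1" using assms by simp
  define a where "a = real (u + x 0)"
  define r where "r = T (u + x 0) (\<lambda>i. x (Suc i))"
  have a: "a \<ge> 1" using assms[of 0] by (simp add: a_def)
  have e: "T u x = (1 - r) / a" unfolding r_def a_def by (rule T_rec[OF assms])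
  have "r < 1 / real (u + x 0 + x (Suc 0))"
    using T_upper_strict[OF sx, of "u + x 0"] by (simp add: r_def)
  also have "\<dots> \<le> 1 / (a + 1)" using assms[of 1] a by (intro divide_left_mono) (auto simp: a_def)
  finally have lt: "r < 1 / (a + 1)" .
  have e2: "real (u + x 0 + 1) = a + 1" by (simp add: a_def)
  have nz: "a + a * a \<noteq> 0" "a \<noteq> 0" "a + 1 \<noteq> 0" using a by (smt (verit) mult_nonneg_nonneg)+
  have "1 / (a + 1) = (1 - 1 / (a + 1)) / a" using nz by (simp add: field_simps)
  also have "\<dots> < (1 - r) / a" using lt a by (intro divide_strict_right_mono) auto
  finally show ?thesis using e e2 by (simp add: add.commute)
qed

lemma T_head: assumes "\<And>i. x i \<ge> 1" "\<And>i. y i \<ge> 1" "T u x = T u y" shows "x 0 = y 0"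
proof -
  have h: "x 0 = y 0" if "\<And>i. x i \<ge> 1" "\<And>i. y i \<ge> 1" "T u x = T u y" "x 0 < y 0" for x y :: "nat \<Rightarrow> nat"
  proof -
    have "T u y < 1 / real (u + y 0)" by (rule T_upper_strict[OF that(2)])
    also have "\<dots> \<le> 1 / real (u + x 0 + 1)" using that(4) that(1)[of 0] by (intro divide_left_mono) auto
    also have "\<dots> < T u x" by (rule T_lower_strict[OF that(1)])
    finally show ?thesis using that(3) by simp
  qed
  show ?thesis using h[of x y] h[of y x] assms by (metis linorder_neqE_nat)
qed

lemma T_inj: assumes "\<And>i. x i \<ge> 1" "\<And>i. y i \<ge> 1" "T u x = T u y" shows "x n = y n"
  using assms
proof (induction n arbitrary: u x y)
  case 0
  show ?case using T_head[of x y u] "0.prems" by blast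
next
  case (Suc n)
  have x0: "x 0 = y 0" using T_head[of x y u] Suc.prems by blast
  have a: "real (u + x 0) > 0" using Suc.prems(1)[of 0] by simp
  have ex: "T u x = (1 - T (u + x 0) (\<lambda>i. x (Suc i))) / real (u + x 0)" by (rule T_rec[OF Suc.prems(1)])
  have ey: "T u y = (1 - T (u + x 0) (\<lambda>i. y (Suc i))) / real (u + x 0)" unfolding x0 by (rule T_rec[OF Suc.prems(2)])
  have "T (u + x 0) (\<lambda>i. x (Suc i)) = T (u + x 0) (\<lambda>i. y (Suc i))"
    using Suc.prems(3) a ex ey by (simp add: divide_cancel_right)
  then show ?case using Suc.IH[of "\<lambda>i. x (Suc i)" "\<lambda>i. y (Suc i)" "u + x 0"] Suc.prems by simp
qed

fun AS :: "nat \<Rightarrow> nat \<Rightarrow> nat \<Rightarrow> real set" where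
  "AS i0 0 u = {1 / real (u + i0 + 1) .. 1 / real (u + i0)}"
| "AS i0 (Suc n) u = (\<Union>t\<in>{u<..}. (\<lambda>z. 1 - real t * z) -` AS i0 n t)"

lemma AS_mem: assumes "\<And>i. x i \<ge> 1" "x n = i0" shows "T u x \<in> AS i0 n u"
  using assms
proof (induction n arbitrary: u x)
  case 0 then show ?case using T_bounds[of x, OF "0.prems"(1), of u] by simp
next
  case (Suc n)
  have sx: "\<And>i. x (Suc i) \<ge> 1" using Suc.prems by simp
  have a: "real (u + x 0) > 0" using Suc.prems(1)[of 0] by simp
  have m: "T (u + x 0) (\<lambda>i. x (Suc i)) \<in> AS i0 n (u + x 0)" using Suc.IH[OF sx] Suc.prems(2) by simp
  have e0: "T u x = (1 - T (u + x 0) (\<lambda>i. x (Suc i))) / real (u + x 0)" by (rule T_rec[OF Suc.prems(1)])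
  have e: "1 - real (u + x 0) * T u x = T (u + x 0) (\<lambda>i. x (Suc i))"
    using a by (subst e0) simp
  have t: "u + x 0 \<in> {u<..}" using Suc.prems(1)[of 0] by simp
  have "T u x \<in> (\<lambda>z. 1 - real (u + x 0) * z) -` AS i0 n (u + x 0)" using m e by simp
  then show ?case using t by (simp only: AS.simps) blast
qed

lemma AS_borel: "AS i0 n u \<in> sets borel"
proof (induction n arbitrary: u)
  case 0 then show ?case by simp
next
  case (Suc n)
  have "(\<lambda>z::real. 1 - real t * z) -` AS i0 n t \<in> sets borel" for t
  proof -
    have "(\<lambda>z::real. 1 - real t * z) \<in> borel_measurable borel" by measurable
    from measurable_sets_borel[OF this Suc.IH[of t]] show ?thesis by simp
  qed
  then show ?case by auto
qed

lemma affine_pre: assumes "t > 0" "A \<in> sets borel"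
  shows "ennreal t * emeasure lborel ((\<lambda>z. 1 - t * z) -` A) = emeasure lborel A"
proof -
  have L: "lborel = density (distr lborel borel (\<lambda>x. 1 + (-t) * x)) (\<lambda>_. ennreal \<bar>-t\<bar>)"
    using lborel_real_affine[of "-t" 1] assms by simp
  have m: "(\<lambda>x::real. 1 + (-t) * x) \<in> borel_measurable lborel" by measurable
  have "emeasure lborel A = emeasure (density (distr lborel borel (\<lambda>x. 1 + (-t) * x)) (\<lambda>_. ennreal \<bar>-t\<bar>)) A"
    by (subst (1) L) (rule refl)
  also have "\<dots> = (\<integral>\<^sup>+ x. ennreal t * indicator A x \<partial>distr lborel borel (\<lambda>x. 1 + (-t) * x))"
    using assms by (subst emeasure_density) auto
  also have "\<dots> = ennreal t * emeasure (distr lborel borel (\<lambda>x. 1 + (-t) * x)) A"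
    using assms by (subst nn_integral_cmult_indicator) auto
  also have "emeasure (distr lborel borel (\<lambda>x. 1 + (-t) * x)) A = emeasure lborel ((\<lambda>z. 1 - t * z) -` A)"
    using assms m by (subst emeasure_distr) auto
  finally show ?thesis by simp
qed

lemma ineq: fixes r :: real assumes r: "r \<ge> 1"
  shows "1 / (r * (r + 1)^2) \<le> 1 / (2 * r^2) - 1 / (2 * (r+1)^2)"
proof -
  have p1: "r > 0" "r + 1 > 0" using r by auto
  have e1: "1 / (2 * r^2) - 1 / (2 * (r+1)^2) = (2*r+1) / (2*r^2*(r+1)^2)"
    using p1 by (simp add: divide_simps) (simp add: algebra_simps power2_eq_square)
  have e2: "1 / (r * (r + 1)^2) = (2*r) / (2*r^2*(r+1)^2)"
    using p1 by (simp add: divide_simps) (simp add: algebra_simps power2_eq_square)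
  have "(2*r) / (2*r^2*(r+1)^2) \<le> (2*r+1) / (2*r^2*(r+1)^2)"
    using p1 by (intro divide_right_mono) auto
  then show ?thesis using e1 e2 by simp
qed

lemma tele: "(\<Sum>t. if u < t then 1 / (real t * (real t + 1)^2) else 0) \<le> 1 / (2 * (real u + 1)^2)"
    "summable (\<lambda>t. if u < t then 1 / (real t * (real t + 1)^2) else (0::real))"
proof -
  define g where "g t = (if u < t then 1 / (real t * (real t + 1)^2) else (0::real))" for t
  define F where "F k = 1 / (2 * (real k + real u + 1)^2)" for k
  define h where "h t = (if u < t then F (t - Suc u) - F (Suc (t - Suc u)) else 0)" for t
  have g0: "0 \<le> g t" for t by (simp add: g_def)
  have gh: "g t \<le> h t" for t
  proof (cases "u < t")
    case True
    define r where "r = real t"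
    have r: "r \<ge> 1" using True by (simp add: r_def)
    have F1: "F (t - Suc u) = 1 / (2 * r^2)" using True by (simp add: F_def r_def of_nat_diff)
    have F2: "F (Suc (t - Suc u)) = 1 / (2 * (r+1)^2)" using True by (simp add: F_def r_def of_nat_diff)
    have "1 / (r * (r + 1)^2) \<le> 1 / (2 * r^2) - 1 / (2 * (r+1)^2)"
      by (rule ineq[OF r])
    then show ?thesis using True F1 F2 by (simp add: g_def h_def r_def)
  qed (simp add: g_def h_def)
  have Ft: "F \<longlonglongrightarrow> 0"
  proof -
    show ?thesis
    proof (rule real_tendsto_sandwich[of "\<lambda>_. 0" _ _ "\<lambda>n. 1 / real (Suc n)"])
      show "\<forall>\<^sub>F n in sequentially. 0 \<le> F n" by (simp add: F_def)
      have "F n \<le> 1 / real (Suc n)" for n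
      proof -
        define w where "w = real n + real u + 1"
        have w1: "w \<ge> real (Suc n)" by (simp add: w_def)
        have w0: "w \<ge> 1" by (simp add: w_def)
        have ww: "w * 1 \<le> w * w" using w0 by (intro mult_left_mono) auto
        have "real (Suc n) \<le> 2 * w^2" using w1 w0 ww unfolding power2_eq_square by linarith
        moreover have w2: "w^2 > 0" using w0 by simp
        ultimately have "1 / (2 * w^2) \<le> 1 / real (Suc n)" by (intro divide_left_mono) (auto intro: mult_pos_pos)
        then show ?thesis unfolding F_def w_def .
      qed
      then show "\<forall>\<^sub>F n in sequentially. F n \<le> 1 / real (Suc n)" by simp
      show "(\<lambda>n. 1 / real (Suc n)) \<longlonglongrightarrow> 0" using LIMSEQ_inverse_real_of_nat by (simp add: inverse_eq_divide)
    qed simp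
  qed
  have hs0: "(\<lambda>k. F k - F (Suc k)) sums (F 0)" using telescope_sums'[OF Ft] by simp
  have "(\<lambda>k. h (k + Suc u)) = (\<lambda>k. F k - F (Suc k))" by (simp add: h_def)
  with hs0 have "(\<lambda>k. h (k + Suc u)) sums F 0" by simp
  then have hs: "h sums (F 0 + (\<Sum>i<Suc u. h i))" using sums_iff_shift[of h "Suc u" "F 0"] by blast
  have "(\<Sum>i<Suc u. h i) = 0" by (simp add: h_def)
  with hs have hs': "h sums (1 / (2 * (real u + 1)^2))" by (simp add: F_def)
  have sg: "summable g" using summable_comparison_test'[of h 0 g] hs' g0 gh by (auto simp: sums_iff)
  then show "summable (\<lambda>t. if u < t then 1 / (real t * (real t + 1)^2) else (0::real))" unfolding g_def .
  have "suminf g \<le> suminf h" using suminf_le[OF gh sg] hs' by (auto simp: sums_iff)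
  then show "(\<Sum>t. if u < t then 1 / (real t * (real t + 1)^2) else 0) \<le> 1 / (2 * (real u + 1)^2)"
    using hs' unfolding g_def by (simp add: sums_iff)
qed


lemma ennreal_div_bound:
  assumes "t > 0" "ennreal t * e \<le> ennreal r" "r \<ge> 0"
  shows "e \<le> ennreal (r / t)"
proof -
  have "e = ennreal (1 / t) * (ennreal t * e)"
    using assms(1) by (simp add: mult.assoc[symmetric] ennreal_mult[symmetric])
  also have "\<dots> \<le> ennreal (1 / t) * ennreal r" using assms(2) by (intro mult_left_mono) auto
  also have "\<dots> = ennreal (r / t)" using assms by (simp add: ennreal_mult[symmetric])
  finally show ?thesis .
qed

lemma AS_meas: assumes "i0 \<ge> 1"
  shows "emeasure lborel (AS i0 n u) \<le> ennreal (1 / 2^n / (real u + 1)^2)"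
proof (induction n arbitrary: u)
  case 0
  define a where "a = real (u + i0)"
  have a: "a \<ge> real u + 1" using assms by (simp add: a_def)
  have le: "1 / (a + 1) \<le> 1 / a" using a by (intro divide_left_mono) auto
  have r1: "real (u + i0 + 1) = a + 1" by (simp add: a_def)
  have r2: "real (u + i0) = a" by (simp add: a_def)
  have eqAS: "AS i0 0 u = {1/(a+1) .. 1/a}" by (simp only: AS.simps r1 r2)
  have a0: "a > 0" using a by (smt (verit) of_nat_0_le_iff)
  have nz: "a \<noteq> 0" "a + 1 \<noteq> 0" using a0 by auto
  have "emeasure lborel (AS i0 0 u) = ennreal (1 / a - 1 / (a + 1))"
    unfolding eqAS using le by simp
  also have "1 / a - 1 / (a + 1) = 1 / (a * (a + 1))" using nz
    by (simp add: field_simps)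
  also have "\<dots> \<le> 1 / (real u + 1)^2" using a
    by (intro divide_left_mono) (auto simp: power2_eq_square intro!: mult_mono mult_pos_pos)
  finally show ?case by (simp add: ennreal_leI)
next
  case (Suc n)
  define c :: real where "c = 1 / 2^n"
  have c0: "c \<ge> 0" by (simp add: c_def)
  define B where "B t = (if u < t then (\<lambda>z. 1 - real t * z) -` AS i0 n t else {})" for t
  have U: "AS i0 (Suc n) u = (\<Union>t. B t)" by (auto simp: B_def split: if_splits)
  have Bs: "range B \<subseteq> sets lborel"
  proof -
    have "(\<lambda>z::real. 1 - real t * z) -` AS i0 n t \<in> sets borel" for t
    proof -
      have "(\<lambda>z::real. 1 - real t * z) \<in> borel_measurable borel" by measurable
      from measurable_sets_borel[OF this AS_borel] show ?thesis by simp
    qed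
    then show ?thesis by (auto simp: B_def)
  qed
  define g where "g t = (if u < t then 1 / (real t * (real t + 1)^2) else (0::real))" for t
  have Bm: "emeasure lborel (B t) \<le> ennreal (c * g t)" for t
  proof (cases "u < t")
    case True
    then have t: "real t > 0" by simp
    have "ennreal (real t) * emeasure lborel (B t) = emeasure lborel (AS i0 n t)"
      using affine_pre[OF t AS_borel] True by (simp add: B_def)
    also have "\<dots> \<le> ennreal (c / (real t + 1)^2)" using Suc.IH[of t] by (simp add: c_def)
    finally have "emeasure lborel (B t) \<le> ennreal (c / (real t + 1)^2 / real t)"
      by (rule ennreal_div_bound[OF t]) (use c0 in simp)
    then show ?thesis using True by (simp add: g_def field_simps)
  qed (simp add: B_def g_def)
  have sg: "summable g" using tele(2)[of u] unfolding g_def .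
  have g0: "\<And>t. 0 \<le> g t" by (simp add: g_def)
  have "emeasure lborel (AS i0 (Suc n) u) \<le> (\<Sum>t. emeasure lborel (B t))"
    unfolding U by (rule emeasure_subadditive_countably[OF Bs])
  also have "\<dots> \<le> (\<Sum>t. ennreal (c * g t))" by (intro suminf_le Bm) auto
  also have "\<dots> = ennreal (\<Sum>t. c * g t)"
    using g0 c0 sg by (intro suminf_ennreal2) (auto intro: summable_mult)
  also have "(\<Sum>t. c * g t) = c * (\<Sum>t. g t)" by (rule suminf_mult[OF sg])
  also have "\<dots> \<le> c * (1 / (2 * (real u + 1)^2))"
    using tele(1)[of u] c0 by (intro mult_left_mono) (auto simp: g_def)
  also have "\<dots> = 1 / 2 ^ Suc n / (real u + 1)^2" by (simp add: c_def)
  finally show ?case by (simp add: ennreal_leI)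
qed

definition SS :: "nat \<Rightarrow> real set" where
  "SS i0 = (\<Inter>N. \<Union>k. AS i0 (k + N) 0)"

lemma SS_borel: "SS i0 \<in> sets lborel"
  unfolding SS_def using AS_borel by auto

lemma SS_null: assumes "i0 \<ge> 1" shows "emeasure lborel (SS i0) = 0"
proof -
  have bnd: "emeasure lborel (SS i0) \<le> ennreal (2 * (1/2)^N)" for N
  proof -
    have "emeasure lborel (SS i0) \<le> emeasure lborel (\<Union>k. AS i0 (k + N) 0)"
      by (rule emeasure_mono) (auto simp: SS_def intro: AS_borel)
    also have "\<dots> \<le> (\<Sum>k. emeasure lborel (AS i0 (k + N) 0))"
      by (rule emeasure_subadditive_countably) (auto intro: AS_borel)
    also have "\<dots> \<le> (\<Sum>k. ennreal ((1/2)^N * (1/2)^k))"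
    proof (intro suminf_le)
      fix k
      have "(1/2::real)^N * (1/2)^k = 1 / 2 ^ (k + N) / (real 0 + 1)^2"
        by (simp add: power_add power_divide)
      then show "emeasure lborel (AS i0 (k + N) 0) \<le> ennreal ((1/2)^N * (1/2)^k)"
        using AS_meas[OF assms, of "k + N" 0] by simp
    qed auto
    also have "\<dots> = ennreal (\<Sum>k. (1/2)^N * (1/2::real)^k)"
      by (intro suminf_ennreal2) (auto intro: summable_mult summable_geometric)
    also have "(\<Sum>k. (1/2)^N * (1/2::real)^k) = 2 * (1/2)^N"
      by (subst suminf_mult[OF summable_geometric]) (auto simp: suminf_geometric)
    finally show ?thesis .
  qed
  show ?thesis
  proof (rule ccontr)
    assume ne: "emeasure lborel (SS i0) \<noteq> 0"
    have "emeasure lborel (SS i0) < top" using bnd[of 0] by (simp add: order_le_less_trans)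
    then obtain r where r: "r \<ge> 0" "emeasure lborel (SS i0) = ennreal r" by (auto simp: less_top_ennreal)
    with ne have rp: "r > 0" by auto
    obtain N where N: "(1/2::real)^N < r / 2" using real_arch_pow_inv[of "r/2" "1/2"] rp by auto
    have "ennreal r \<le> ennreal (2 * (1/2)^N)" using bnd[of N] r by simp
    then have "r \<le> 2 * (1/2)^N" by (simp add: ennreal_le_iff2) (use r in auto)
    with N show False by simp
  qed
qed

lemma SS_mem: assumes "\<And>i. x i \<ge> 1" "\<And>N. \<exists>n\<ge>N. x n = i0" shows "T 0 x \<in> SS i0"
  unfolding SS_def
proof
  fix N
  obtain n where n: "n \<ge> N" "x n = i0" using assms(2) by blast
  have "T 0 x \<in> AS i0 ((n - N) + N) 0" using AS_mem[of x n i0 0, OF assms(1)] n by simp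
  then show "T 0 x \<in> (\<Union>k. AS i0 (k + N) 0)" by blast
qed


lemma eta_T: "eta_series X \<omega> = T 0 (\<lambda>i. X i \<omega>)"
  unfolding eta_series_def T_def by simp

theorem theorem5:
  fixes M :: "'a measure" and X :: "nat \<Rightarrow> 'a \<Rightarrow> nat" and p :: "nat \<Rightarrow> real"
  assumes "prob_space M"
    and "prob_space.indep_vars M (\<lambda>_. count_space UNIV) X UNIV"
    and "\<And>k \<omega>. \<omega> \<in> space M \<Longrightarrow> X k \<omega> \<ge> 1"
    and "\<And>k m. measure M {\<omega> \<in> space M. X k \<omega> = m} = p m"
    and "\<And>m. p m \<ge> 0"
    and "(\<lambda>m. p (Suc m)) sums 1"
  shows "((\<exists>i\<ge>1. p i = 1) \<longrightarrow>
            (\<exists>c. measure M {\<omega> \<in> space M. eta_series X \<omega> = c} = 1))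
       \<and> ((\<nexists>i. i \<ge> 1 \<and> p i = 1) \<longrightarrow>
            (\<forall>x. measure M {\<omega> \<in> space M. eta_series X \<omega> = x} = 0)
            \<and> (\<exists>S \<in> sets lborel. emeasure lborel S = 0 \<and>
                 measure M {\<omega> \<in> space M. eta_series X \<omega> \<in> S} = 1))"
proof -
  interpret prob_space M by (rule assms(1))
  have ind0: "indep_vars (\<lambda>_. count_space UNIV) X UNIV" by (rule assms(2))
  have Xm[measurable]: "X i \<in> measurable M (count_space UNIV)" for i
    using ind0 unfolding indep_vars_def2 by auto
  have ind: "indep_sets (\<lambda>i. {X i -` A \<inter> space M | A. A \<in> sets (count_space UNIV)}) UNIV"
    using ind0 unfolding indep_vars_def2 by auto
  have Xge: "\<And>k \<omega>. \<omega> \<in> space M \<Longrightarrow> X k \<omega> \<ge> 1" by (rule assms(3))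
  have pX: "\<And>k m. prob {\<omega> \<in> space M. X k \<omega> = m} = p m" by (rule assms(4))
  have prodP: "prob (\<Inter>j\<in>J. {\<omega>\<in>space M. X j \<omega> \<in> B j}) = (\<Prod>j\<in>J. prob {\<omega>\<in>space M. X j \<omega> \<in> B j})"
    if "finite J" "J \<noteq> {}" for J and B :: "nat \<Rightarrow> nat set"
  proof -
    have e: "\<And>j. {\<omega>\<in>space M. X j \<omega> \<in> B j} = X j -` B j \<inter> space M" by auto
    show ?thesis unfolding e
      by (rule indep_setsD[OF ind]) (use that in auto)
  qed
  have etam[measurable]: "eta_series X \<in> borel_measurable M"
    unfolding eta_series_def[abs_def] by measurable
  have etaT: "\<And>\<omega>. eta_series X \<omega> = T 0 (\<lambda>i. X i \<omega>)" by (rule eta_T)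
  have p0: "p 0 = 0"
  proof -
    have "{\<omega> \<in> space M. X 0 \<omega> = 0} = {}" using Xge[of _ 0] by fastforce
    then have "prob {\<omega> \<in> space M. X 0 \<omega> = 0} = 0" by (simp only: measure_empty)
    then show ?thesis using pX[of 0 0] by simp
  qed
  have ple1: "p m \<le> 1" for m using pX[of 0 m] by (metis prob_le_1)
  have pcd: "p c + p d \<le> 1" if "c \<noteq> d" for c d
  proof -
    have "prob ({\<omega> \<in> space M. X 0 \<omega> = c} \<union> {\<omega> \<in> space M. X 0 \<omega> = d}) =
          prob {\<omega> \<in> space M. X 0 \<omega> = c} + prob {\<omega> \<in> space M. X 0 \<omega> = d}"
      using that by (intro finite_measure_Union) auto
    then show ?thesis using pX[of 0 c] pX[of 0 d] by (metis prob_le_1)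
  qed
  show ?thesis
  proof (intro conjI impI)
    assume "\<exists>i\<ge>1. p i = 1"
    then obtain i where i: "p i = 1" by blast
    have "AE \<omega> in M. X k \<omega> = i" for k
      using prob_Collect_eq_1[of "\<lambda>\<omega>. X k \<omega> = i"] pX[of k i] i by simp
    then have "AE \<omega> in M. \<forall>k. X k \<omega> = i" by (simp add: AE_all_countable)
    then have "AE \<omega> in M. eta_series X \<omega> = T 0 (\<lambda>_. i)"
      by eventually_elim (simp add: etaT)
    then have "prob {\<omega> \<in> space M. eta_series X \<omega> = T 0 (\<lambda>_. i)} = 1"
      by (subst prob_Collect_eq_1) auto
    then show "\<exists>c. measure M {\<omega> \<in> space M. eta_series X \<omega> = c} = 1" by blast
  next
    assume no1: "\<nexists>i. i \<ge> 1 \<and> p i = 1"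
    have plt1: "p c < 1" for c
    proof (cases "c = 0")
      case True then show ?thesis using p0 by simp
    next
      case False
      then have "c \<ge> 1" by simp
      then have "p c \<noteq> 1" using no1 by blast
      then show ?thesis using ple1[of c] by linarith
    qed
    obtain q where q: "q < 1" "\<And>c. p c \<le> q"
    proof (cases "\<exists>c. p c > 1/2")
      case True
      then obtain c where c: "p c > 1/2" by blast
      have "p d \<le> p c" for d
        using pcd[of c d] c by (cases "c = d") auto
      then show ?thesis using that[of "p c"] plt1[of c] by blast
    next
      case False
      then have "\<And>c. p c \<le> 1/2" by (simp add: not_less)
      then show ?thesis using that[of "1/2"] by simp
    qed
    have q0: "q \<ge> 0" using q(2)[of 0] assms(5)[of 0] by linarith
    show "\<forall>x. measure M {\<omega> \<in> space M. eta_series X \<omega> = x} = 0"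
    proof
      fix x
      show "measure M {\<omega> \<in> space M. eta_series X \<omega> = x} = 0"
      proof (cases "{\<omega> \<in> space M. eta_series X \<omega> = x} = {}")
        case True then show ?thesis by (simp only: True measure_empty)
      next
        case False
        then obtain \<omega>0 where w0: "\<omega>0 \<in> space M" "eta_series X \<omega>0 = x" by auto
        define c where "c = (\<lambda>k. X k \<omega>0)"
        have bnd: "prob {\<omega> \<in> space M. eta_series X \<omega> = x} \<le> q ^ Suc n" for n
        proof -
          have sub: "{\<omega> \<in> space M. eta_series X \<omega> = x} \<subseteq> (\<Inter>j\<in>{..n}. {\<omega>\<in>space M. X j \<omega> \<in> {c j}})"
          proof -
            have all: "X j \<omega> = c j" if w: "\<omega> \<in> space M" "eta_series X \<omega> = x" for \<omega> j
            proof -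
              have "T 0 (\<lambda>i. X i \<omega>) = T 0 c" using w w0 by (simp add: etaT c_def)
              then show ?thesis
                using T_inj[of "\<lambda>i. X i \<omega>" c 0 j] Xge[OF w(1)] Xge[OF w0(1)] by (simp add: c_def)
            qed
            then show ?thesis by auto
          qed
          have "prob {\<omega> \<in> space M. eta_series X \<omega> = x} \<le> prob (\<Inter>j\<in>{..n}. {\<omega>\<in>space M. X j \<omega> \<in> {c j}})"
            by (rule finite_measure_mono[OF sub]) auto
          also have "\<dots> = (\<Prod>j\<in>{..n}. prob {\<omega>\<in>space M. X j \<omega> \<in> {c j}})"
            by (rule prodP) auto
          also have "\<dots> = (\<Prod>j\<in>{..n}. p (c j))" using pX by simp
          also have "\<dots> \<le> (\<Prod>j\<in>{..n}. q)" using assms(5) q(2) by (intro prod_mono) auto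
          also have "\<dots> = q ^ Suc n" by simp
          finally show ?thesis .
        qed
        show ?thesis
        proof (rule ccontr)
          assume "measure M {\<omega> \<in> space M. eta_series X \<omega> = x} \<noteq> 0"
          then have pos: "prob {\<omega> \<in> space M. eta_series X \<omega> = x} > 0" using measure_nonneg
            by (simp add: order_neq_le_trans)
          obtain n where n: "q ^ n < prob {\<omega> \<in> space M. eta_series X \<omega> = x}"
            using real_arch_pow_inv[OF pos q(1)] by blast
          have "q ^ Suc n \<le> q ^ n" using q0 q(1) by (intro power_decreasing) auto
          then show False using bnd[of n] n by simp
        qed
      qed
    qed
    obtain i0 where i0: "p i0 > 0" "i0 \<ge> 1"
    proof -
      have "\<exists>m. p (Suc m) \<noteq> 0"
      proof (rule ccontr)
        assume "\<not> ?thesis"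
        then have "(\<lambda>m. p (Suc m)) sums 0" by simp
        then show False using assms(6) sums_unique2 by fastforce
      qed
      then obtain m where "p (Suc m) \<noteq> 0" by blast
      then show ?thesis using that[of "Suc m"] assms(5)[of "Suc m"] by simp
    qed
    have AEinf: "AE \<omega> in M. \<forall>N. \<exists>n\<ge>N. X n \<omega> = i0"
    proof (subst AE_all_countable, intro allI)
      fix N
      let ?N = "{\<omega> \<in> space M. \<not> (\<exists>n\<ge>N. X n \<omega> = i0)}"
      have Nm: "?N \<in> sets M" by measurable
      have b: "prob ?N \<le> (1 - p i0) ^ Suc K" for K
      proof -
        have "?N \<subseteq> (\<Inter>j\<in>{N..N+K}. {\<omega>\<in>space M. X j \<omega> \<in> - {i0}})" by auto
        then have "prob ?N \<le> prob (\<Inter>j\<in>{N..N+K}. {\<omega>\<in>space M. X j \<omega> \<in> - {i0}})"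
          by (rule finite_measure_mono) auto
        also have "\<dots> = (\<Prod>j\<in>{N..N+K}. prob {\<omega>\<in>space M. X j \<omega> \<in> - {i0}})"
          by (rule prodP) auto
        also have "\<dots> = (\<Prod>j\<in>{N..N+K}. 1 - p i0)"
        proof (intro prod.cong refl)
          fix j
          have "{\<omega>\<in>space M. X j \<omega> \<in> - {i0}} = space M - {\<omega>\<in>space M. X j \<omega> = i0}" by auto
          then show "prob {\<omega>\<in>space M. X j \<omega> \<in> - {i0}} = 1 - p i0"
            using prob_compl[of "{\<omega>\<in>space M. X j \<omega> = i0}"] pX[of j i0] by simp
        qed
        also have "\<dots> = (1 - p i0) ^ Suc K" by simp
        finally show ?thesis .
      qed
      have "prob ?N = 0"
      proof (rule ccontr)
        assume "prob ?N \<noteq> 0"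
        then have pos: "prob ?N > 0" by (simp add: order_neq_le_trans)
        obtain n where n: "(1 - p i0) ^ n < prob ?N"
          using real_arch_pow_inv[OF pos, of "1 - p i0"] i0 by auto
        have "(1 - p i0) ^ Suc n \<le> (1 - p i0) ^ n"
          using i0 ple1[of i0] by (intro power_decreasing) auto
        then show False using b[of n] n by simp
      qed
      then have "emeasure M ?N = 0" by (simp add: emeasure_eq_measure)
      then show "AE \<omega> in M. \<exists>n\<ge>N. X n \<omega> = i0"
        using AE_iff_measurable[OF Nm refl] by simp
    qed
    have AEs: "AE \<omega> in M. eta_series X \<omega> \<in> SS i0"
      using AEinf AE_space
    proof eventually_elim
      case (elim \<omega>)
      then show ?case using SS_mem[of "\<lambda>i. X i \<omega>" i0] Xge[of \<omega>] by (simp add: etaT)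
    qed
    have Sm: "{\<omega> \<in> space M. eta_series X \<omega> \<in> SS i0} \<in> sets M"
    proof -
      have "SS i0 \<in> sets borel" using SS_borel by simp
      then show ?thesis by measurable
    qed
    show "\<exists>S \<in> sets lborel. emeasure lborel S = 0 \<and>
                 measure M {\<omega> \<in> space M. eta_series X \<omega> \<in> S} = 1"
      using SS_borel SS_null[OF i0(2)] prob_Collect_eq_1[OF Sm] AEs by blast
  qed
qed

end
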